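(* Let $\mathscr S=([0,\infty)\rtimes\mathbb{N}^{\times},\mathcal O)$ be the scaling site defined below. The canonical projection from the set $\mathscr S(\mathbb{R}_{\max})$ of points of $\mathscr S$ defined over $\mathbb{R}_+^{\max}$ to the set of (isomorphism classes of) points of the topos $[0,\infty)\rtimes\mathbb{N}^{\times}$ is bijective.
   Context: $\mathbb{N}^{\times}$ is the multiplicative monoid of positive integers; $[0,\infty)\rtimes\mathbb{N}^{\times}$ is the topos of $\mathbb{N}^{\times}$-equivariant sheaves of sets on $[0,\infty)$. $\mathbb{R}_{\max}=\mathbb{R}\cup\{-\infty\}$ with addition $\max$ and multiplication $+$, isomorphic via $\exp$ to $\mathbb{R}_+^{\max}$. The structure sheaf $\mathcal O$ assigns to an open $U\subset[0,\infty)$ the semiring (operations max and $+$) of continuous convex functions $f:U\to\mathbb{R}_{\max}$ such that every $\lambda\in U$ has an open interval neighborhood $V$ on which $f$ is affine with integer slope on each component of $V\setminus\{\lambda\}$; $n\in\mathbb{N}^{\times}$ acts by $f\mapsto f(n\,\cdot)$. A point of $\mathscr S$ over $\mathbb{R}_+^{\max}$ is a pair consisting of a point $\mathfrak p$ of the topos and an $\mathbb{R}_{\max}$-linear semiring morphism from the stalk $\mathcal O_{\mathfrak p}$ to $\mathbb{R}_{\max}$; the projection forgets the morphism. *)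

theory Defs
  imports "HOL-Analysis.Analysis" "HOL-Library.Extended_Real"
begin

text \<open>R_max = R \<union> {-\<infinity>} is modelled inside ereal (values never +\<infinity>);
  semiring operations: max and +.\<close>

definition opn :: "real set \<Rightarrow> bool" where
  "opn U \<longleftrightarrow> openin (top_of_set {0::real..}) U"

text \<open>Site of the topos [0,\<infinity>) \<rtimes> N^x: objects are opens of [0,\<infinity>), a morphism
  V \<rightarrow> U is a positive integer n with n V \<subseteq> U; composition is multiplication.\<close>
definition hom_site :: "nat \<Rightarrow> real set \<Rightarrow> real set \<Rightarrow> bool" where
  "hom_site n V U \<longleftrightarrow> opn V \<and> opn U \<and> n \<ge> 1 \<and> (\<forall>x\<in>V. real n * x \<in> U)"

definition affine_int_on :: "real set \<Rightarrow> (real \<Rightarrow> ereal) \<Rightarrow> bool" where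
  "affine_int_on S f \<longleftrightarrow> (\<forall>x\<in>S. f x = -\<infinity>) \<or>
     (\<exists>(m::int) (b::real). \<forall>x\<in>S. f x = ereal (of_int m * x + b))"

definition O_sec :: "real set \<Rightarrow> (real \<Rightarrow> ereal) set" where
  "O_sec U = {f. (\<forall>x\<in>U. f x \<noteq> \<infinity>) \<and> continuous_on U f \<and>
     (\<forall>x\<in>U. \<forall>y\<in>U. \<forall>t::real. x \<le> y \<and> {x..y} \<subseteq> U \<and> 0 \<le> t \<and> t \<le> 1 \<longrightarrow>
        f ((1 - t) * x + t * y) \<le> ereal (1 - t) * f x + ereal t * f y) \<and>
     (\<forall>l\<in>U. \<exists>e>0. {l - e<..<l + e} \<inter> {0..} \<subseteq> U \<and>
        affine_int_on ({l - e<..<l} \<inter> {0..}) f \<and>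
        affine_int_on ({l<..<l + e} \<inter> {0..}) f)}"

text \<open>A point of the topos of sheaves on the site: a flat (filtering) functor
  A : C \<rightarrow> Set which is continuous for the open-cover coverage.
  Ob U = A(U), Ar n V U = A(n : V \<rightarrow> U).\<close>
definition is_point :: "(real set \<Rightarrow> 'p set) \<Rightarrow> (nat \<Rightarrow> real set \<Rightarrow> real set \<Rightarrow> 'p \<Rightarrow> 'p) \<Rightarrow> bool" where
  "is_point Ob Ar \<longleftrightarrow>
     (\<forall>n V U b. hom_site n V U \<and> b \<in> Ob V \<longrightarrow> Ar n V U b \<in> Ob U) \<and>
     (\<forall>U b. opn U \<and> b \<in> Ob U \<longrightarrow> Ar 1 U U b = b) \<and>
     (\<forall>n m V U W b. hom_site n V U \<and> hom_site m U W \<and> b \<in> Ob V \<longrightarrow>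
         Ar (m * n) V W b = Ar m U W (Ar n V U b)) \<and>
     (\<exists>U. opn U \<and> Ob U \<noteq> {}) \<and>
     (\<forall>U V a b. opn U \<and> opn V \<and> a \<in> Ob U \<and> b \<in> Ob V \<longrightarrow>
         (\<exists>W c k l. c \<in> Ob W \<and> hom_site k W U \<and> hom_site l W V \<and>
                    Ar k W U c = a \<and> Ar l W V c = b)) \<and>
     (\<forall>V U b n m. hom_site n V U \<and> hom_site m V U \<and> b \<in> Ob V \<and> Ar n V U b = Ar m V U b \<longrightarrow>
         (\<exists>W c k. c \<in> Ob W \<and> hom_site k W V \<and> Ar k W V c = b \<and> n * k = m * k)) \<and>
     (\<forall>U \<U>. opn U \<and> (\<forall>V\<in>\<U>. opn V) \<and> \<Union>\<U> = U \<longrightarrow>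
         Ob U = (\<Union>V\<in>\<U>. Ar 1 V U ` Ob V))"

text \<open>An R_max-linear semiring morphism from the stalk O_p (the filtered colimit of
  O(U) over the category of elements (U,a), a \<in> A(U)) to R_max, given by its universal
  property: a compatible family of R_max-linear semiring morphisms O(U) \<rightarrow> R_max.\<close>
definition stalk_hom :: "(real set \<Rightarrow> 'p set) \<Rightarrow> (nat \<Rightarrow> real set \<Rightarrow> real set \<Rightarrow> 'p \<Rightarrow> 'p)
     \<Rightarrow> (real set \<Rightarrow> 'p \<Rightarrow> (real \<Rightarrow> ereal) \<Rightarrow> ereal) \<Rightarrow> bool" where
  "stalk_hom Ob Ar \<phi> \<longleftrightarrow>
     (\<forall>U a f g. opn U \<and> a \<in> Ob U \<and> f \<in> O_sec U \<and> g \<in> O_sec U \<and> (\<forall>x\<in>U. f x = g x)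
         \<longrightarrow> \<phi> U a f = \<phi> U a g) \<and>
     (\<forall>k W U c f. hom_site k W U \<and> c \<in> Ob W \<and> f \<in> O_sec U \<longrightarrow>
         \<phi> W c (\<lambda>x. f (real k * x)) = \<phi> U (Ar k W U c) f) \<and>
     (\<forall>U a. opn U \<and> a \<in> Ob U \<longrightarrow>
        (\<forall>f\<in>O_sec U. \<phi> U a f \<noteq> \<infinity>) \<and>
        (\<forall>f\<in>O_sec U. \<forall>g\<in>O_sec U. \<phi> U a (\<lambda>x. max (f x) (g x)) = max (\<phi> U a f) (\<phi> U a g)) \<and>
        (\<forall>f\<in>O_sec U. \<forall>g\<in>O_sec U. \<phi> U a (\<lambda>x. f x + g x) = \<phi> U a f + \<phi> U a g) \<and>
        \<phi> U a (\<lambda>x. -\<infinity>) = -\<infinity> \<and>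
        \<phi> U a (\<lambda>x. 0) = 0 \<and>
        (\<forall>f\<in>O_sec U. \<forall>c::real. \<phi> U a (\<lambda>x. ereal c + f x) = ereal c + \<phi> U a f))"

definition point_aut :: "(real set \<Rightarrow> 'p set) \<Rightarrow> (nat \<Rightarrow> real set \<Rightarrow> real set \<Rightarrow> 'p \<Rightarrow> 'p)
     \<Rightarrow> (real set \<Rightarrow> 'p \<Rightarrow> 'p) \<Rightarrow> bool" where
  "point_aut Ob Ar \<sigma> \<longleftrightarrow>
     (\<forall>U. opn U \<longrightarrow> bij_betw (\<sigma> U) (Ob U) (Ob U)) \<and>
     (\<forall>n V U b. hom_site n V U \<and> b \<in> Ob V \<longrightarrow> \<sigma> U (Ar n V U b) = Ar n V U (\<sigma> V b))"

end

theory Submission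
  imports Defs
begin


lemma opn_ball:
  assumes "opn V" "l \<in> V"
  shows "\<exists>e>0. {l-e<..<l+e} \<inter> {0..} \<subseteq> V"
proof -
  obtain T where T: "open T" "V = {0..} \<inter> T" using assms(1) unfolding opn_def openin_open by auto
  then have "l \<in> T" using assms by auto
  then obtain e where e: "e > 0" "\<forall>y. dist y l < e \<longrightarrow> y \<in> T" using T(1) unfolding open_dist by blast
  have "{l-e<..<l+e} \<inter> {0..} \<subseteq> V"
  proof
    fix y assume "y \<in> {l-e<..<l+e} \<inter> {0..}"
    then have "dist y l < e" "y \<ge> 0" by (auto simp: dist_real_def)
    then show "y \<in> V" using e T by auto
  qed
  then show ?thesis using e by blast
qed

lemma opn_Int_open: "opn U \<Longrightarrow> open T \<Longrightarrow> opn (U \<inter> T)"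
  unfolding opn_def by (rule openin_Int_open)

lemma opn_empty: "opn {}" unfolding opn_def by simp

lemma opn_Int: "opn U \<Longrightarrow> opn V \<Longrightarrow> opn (U \<inter> V)"
  unfolding opn_def by (rule openin_Int)

lemma opn_sub: "opn U \<Longrightarrow> U \<subseteq> {0..}"
  unfolding opn_def using openin_imp_subset by fastforce

lemma affine_int_on_mono: "affine_int_on S f \<Longrightarrow> T \<subseteq> S \<Longrightarrow> affine_int_on T f"
  unfolding affine_int_on_def by blast

lemma affine_int_on_cong: "affine_int_on S f \<Longrightarrow> (\<forall>x\<in>S. f x = g x) \<Longrightarrow> affine_int_on S g"
  unfolding affine_int_on_def by auto

lemma O_sec_cong:
  assumes "f \<in> O_sec U" "\<forall>x\<in>U. f x = g x"
  shows "g \<in> O_sec U"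
proof -
  have c: "continuous_on U g" using assms continuous_on_cong unfolding O_sec_def by fastforce
  have cv: "\<forall>x\<in>U. \<forall>y\<in>U. \<forall>t::real. x \<le> y \<and> {x..y} \<subseteq> U \<and> 0 \<le> t \<and> t \<le> 1 \<longrightarrow>
        g ((1 - t) * x + t * y) \<le> ereal (1 - t) * g x + ereal t * g y"
  proof (intro ballI allI impI)
    fix x y t :: real assume xy: "x \<in> U" "y \<in> U" "x \<le> y \<and> {x..y} \<subseteq> U \<and> 0 \<le> t \<and> t \<le> 1"
    have "(1 - t) * x + t * y \<in> {x..y}"
    proof -
      have "(1 - t) * x + t * y = x + t * (y - x)" by algebra
      moreover have "t * (y - x) \<ge> 0" "t * (y - x) \<le> y - x"
        using xy by (auto simp: mult_left_le_one_le)
      ultimately show ?thesis by auto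
    qed
    then have "(1 - t) * x + t * y \<in> U" using xy by auto
    moreover have "f ((1 - t) * x + t * y) \<le> ereal (1 - t) * f x + ereal t * f y"
      using assms(1) xy unfolding O_sec_def by blast
    ultimately show "g ((1 - t) * x + t * y) \<le> ereal (1 - t) * g x + ereal t * g y"
      using assms(2) xy by metis
  qed
  have loc: "\<forall>l\<in>U. \<exists>e>0. {l - e<..<l + e} \<inter> {0..} \<subseteq> U \<and>
        affine_int_on ({l - e<..<l} \<inter> {0..}) g \<and>
        affine_int_on ({l<..<l + e} \<inter> {0..}) g"
  proof
    fix l assume "l \<in> U"
    then obtain e where e: "e>0" "{l - e<..<l + e} \<inter> {0..} \<subseteq> U"
        "affine_int_on ({l - e<..<l} \<inter> {0..}) f" "affine_int_on ({l<..<l + e} \<inter> {0..}) f"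
      using assms(1) unfolding O_sec_def by blast
    have s1: "{l - e<..<l} \<inter> {0..} \<subseteq> U" "{l<..<l + e} \<inter> {0..} \<subseteq> U" using e(2) by auto
    show "\<exists>e>0. {l - e<..<l + e} \<inter> {0..} \<subseteq> U \<and>
        affine_int_on ({l - e<..<l} \<inter> {0..}) g \<and> affine_int_on ({l<..<l + e} \<inter> {0..}) g"
      using e s1 assms(2) affine_int_on_cong by (metis subsetD)
  qed
  have nf: "\<forall>x\<in>U. g x \<noteq> \<infinity>" using assms unfolding O_sec_def by force
  show ?thesis unfolding O_sec_def mem_Collect_eq by (intro conjI nf c cv loc)
qed

lemma O_sec_restrict:
  assumes "f \<in> O_sec U" "opn V" "V \<subseteq> U"
  shows "f \<in> O_sec V"
proof -
  have loc: "\<forall>l\<in>V. \<exists>e>0. {l - e<..<l + e} \<inter> {0..} \<subseteq> V \<and>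
        affine_int_on ({l - e<..<l} \<inter> {0..}) f \<and>
        affine_int_on ({l<..<l + e} \<inter> {0..}) f"
  proof
    fix l assume l: "l \<in> V"
    then obtain e where e: "e>0"
        "affine_int_on ({l - e<..<l} \<inter> {0..}) f" "affine_int_on ({l<..<l + e} \<inter> {0..}) f"
      using assms unfolding O_sec_def by blast
    obtain d where d: "d > 0" "{l-d<..<l+d} \<inter> {0..} \<subseteq> V" using opn_ball[OF assms(2) l] by blast
    define e' where "e' = min e d"
    have sub: "{l - e'<..<l} \<inter> {0..} \<subseteq> {l - e<..<l} \<inter> {0..}"
         "{l<..<l + e'} \<inter> {0..} \<subseteq> {l<..<l + e} \<inter> {0..}"
         "{l - e'<..<l + e'} \<inter> {0..} \<subseteq> {l-d<..<l+d} \<inter> {0..}"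
      unfolding e'_def by auto
    have "e' > 0" using e d by (simp add: e'_def)
    moreover have "{l - e'<..<l + e'} \<inter> {0..} \<subseteq> V" using sub(3) d(2) by (rule order_trans)
    moreover have "affine_int_on ({l - e'<..<l} \<inter> {0..}) f" using affine_int_on_mono[OF e(2) sub(1)] .
    moreover have "affine_int_on ({l<..<l + e'} \<inter> {0..}) f" using affine_int_on_mono[OF e(3) sub(2)] .
    ultimately show "\<exists>e>0. {l - e<..<l + e} \<inter> {0..} \<subseteq> V \<and>
        affine_int_on ({l - e<..<l} \<inter> {0..}) f \<and> affine_int_on ({l<..<l + e} \<inter> {0..}) f"
      by blast
  qed
  have f: "(\<forall>x\<in>U. f x \<noteq> \<infinity>) \<and> continuous_on U f \<and>
     (\<forall>x\<in>U. \<forall>y\<in>U. \<forall>t::real. x \<le> y \<and> {x..y} \<subseteq> U \<and> 0 \<le> t \<and> t \<le> 1 \<longrightarrow>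
        f ((1 - t) * x + t * y) \<le> ereal (1 - t) * f x + ereal t * f y)"
    using assms(1) unfolding O_sec_def by blast
  have c: "continuous_on V f" using f assms(3) continuous_on_subset by blast
  have cv: "\<forall>x\<in>V. \<forall>y\<in>V. \<forall>t::real. x \<le> y \<and> {x..y} \<subseteq> V \<and> 0 \<le> t \<and> t \<le> 1 \<longrightarrow>
        f ((1 - t) * x + t * y) \<le> ereal (1 - t) * f x + ereal t * f y"
  proof (intro ballI allI impI)
    fix x y t :: real assume h: "x \<in> V" "y \<in> V" "x \<le> y \<and> {x..y} \<subseteq> V \<and> 0 \<le> t \<and> t \<le> 1"
    then have "x \<in> U" "y \<in> U" "x \<le> y \<and> {x..y} \<subseteq> U \<and> 0 \<le> t \<and> t \<le> 1" using assms(3) by auto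
    then show "f ((1 - t) * x + t * y) \<le> ereal (1 - t) * f x + ereal t * f y" using f by blast
  qed
  have nf: "\<forall>x\<in>V. f x \<noteq> \<infinity>" using f assms(3) by blast
  show ?thesis unfolding O_sec_def mem_Collect_eq by (intro conjI nf c cv loc)
qed

lemma aff_O_sec:
  assumes "opn U"
  shows "(\<lambda>y. ereal (of_int m * y + b)) \<in> O_sec U"
proof -
  have c: "continuous_on U (\<lambda>y. ereal (of_int m * y + b))"
    by (intro continuous_intros)
  have cv: "ereal (of_int m * ((1 - t) * x + t * y) + b) \<le>
      ereal (1 - t) * ereal (of_int m * x + b) + ereal t * ereal (of_int m * y + b)" for t x y :: real
  proof -
    have "of_int m * ((1 - t) * x + t * y) + b = (1 - t) * (of_int m * x + b) + t * (of_int m * y + b)"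
      by algebra
    then show ?thesis by simp
  qed
  have loc: "\<forall>l\<in>U. \<exists>e>0. {l - e<..<l + e} \<inter> {0..} \<subseteq> U \<and>
        affine_int_on ({l - e<..<l} \<inter> {0..}) (\<lambda>y. ereal (of_int m * y + b)) \<and>
        affine_int_on ({l<..<l + e} \<inter> {0..}) (\<lambda>y. ereal (of_int m * y + b))"
    using opn_ball[OF assms] unfolding affine_int_on_def by blast
  show ?thesis unfolding O_sec_def using c cv loc by auto
qed



lemma pt_map: "is_point Ob Ar \<Longrightarrow> hom_site n V U \<Longrightarrow> b \<in> Ob V \<Longrightarrow> Ar n V U b \<in> Ob U"
  apply (drule iffD1[OF is_point_def, THEN conjunct1]) by blast
lemma pt_comp: "is_point Ob Ar \<Longrightarrow> hom_site n V U \<Longrightarrow> hom_site m U W \<Longrightarrow> b \<in> Ob V \<Longrightarrow>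
         Ar (m * n) V W b = Ar m U W (Ar n V U b)"
  apply (drule iffD1[OF is_point_def, THEN conjunct2[THEN conjunct2, THEN conjunct1]]) by blast
lemma pt_filt: "is_point Ob Ar \<Longrightarrow> opn U \<Longrightarrow> opn V \<Longrightarrow> a \<in> Ob U \<Longrightarrow> b \<in> Ob V \<Longrightarrow>
         (\<exists>W c k l. c \<in> Ob W \<and> hom_site k W U \<and> hom_site l W V \<and>
                    Ar k W U c = a \<and> Ar l W V c = b)"
  apply (drule iffD1[OF is_point_def, THEN conjunct2[THEN conjunct2, THEN conjunct2, THEN conjunct2, THEN conjunct1]]) by blast
lemma pt_eq: "is_point Ob Ar \<Longrightarrow> hom_site n V U \<Longrightarrow> hom_site m V U \<Longrightarrow> b \<in> Ob V \<Longrightarrow> Ar n V U b = Ar m V U b \<Longrightarrow>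
         (\<exists>W c k. c \<in> Ob W \<and> hom_site k W V \<and> Ar k W V c = b \<and> n * k = m * k)"
  apply (drule iffD1[OF is_point_def, THEN conjunct2[THEN conjunct2, THEN conjunct2, THEN conjunct2, THEN conjunct2, THEN conjunct1]]) by blast
lemma pt_sheaf: "is_point Ob Ar \<Longrightarrow> opn U \<Longrightarrow> (\<forall>V\<in>\<U>. opn V) \<Longrightarrow> \<Union>\<U> = U \<Longrightarrow>
         Ob U = (\<Union>V\<in>\<U>. Ar 1 V U ` Ob V)"
  apply (drule iffD1[OF is_point_def, THEN conjunct2[THEN conjunct2, THEN conjunct2, THEN conjunct2, THEN conjunct2, THEN conjunct2]]) by blast

lemma pt_empty: "is_point Ob Ar \<Longrightarrow> Ob {} = {}"
  using pt_sheaf[of Ob Ar "{}" "{}"] opn_empty by simp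

lemma hom1: "opn V \<Longrightarrow> opn U \<Longrightarrow> V \<subseteq> U \<Longrightarrow> hom_site 1 V U"
  unfolding hom_site_def by auto

lemma good_mono:
  assumes P: "is_point Ob Ar" and "opn V" "opn V'" "opn U" "V \<subseteq> V'" "V' \<subseteq> U"
    and "a \<in> Ar 1 V U ` Ob V"
  shows "a \<in> Ar 1 V' U ` Ob V'"
proof -
  obtain b where b: "b \<in> Ob V" "a = Ar 1 V U b" using assms by blast
  have h1: "hom_site 1 V V'" "hom_site 1 V' U" using assms hom1 by auto
  have "Ar (1 * 1) V U b = Ar 1 V' U (Ar 1 V V' b)" using pt_comp[OF P h1 b(1)] .
  moreover have "Ar 1 V V' b \<in> Ob V'" using pt_map[OF P h1(1) b(1)] .
  ultimately show ?thesis using b by auto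
qed

lemma good_Int:
  assumes P: "is_point Ob Ar" and o: "opn V1" "opn V2" "opn U" "V1 \<subseteq> U" "V2 \<subseteq> U"
    and g: "a \<in> Ar 1 V1 U ` Ob V1" "a \<in> Ar 1 V2 U ` Ob V2"
  shows "a \<in> Ar 1 (V1 \<inter> V2) U ` Ob (V1 \<inter> V2)"
proof -
  obtain a1 where a1: "a1 \<in> Ob V1" "a = Ar 1 V1 U a1" using g by blast
  obtain a2 where a2: "a2 \<in> Ob V2" "a = Ar 1 V2 U a2" using g by blast
  obtain W c k l where W: "c \<in> Ob W" "hom_site k W V1" "hom_site l W V2"
      "Ar k W V1 c = a1" "Ar l W V2 c = a2"
    using pt_filt[OF P o(1,2) a1(1) a2(1)] by blast
  have h1: "hom_site 1 V1 U" "hom_site 1 V2 U" using o hom1 by auto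
  have ak: "a = Ar k W U c" using pt_comp[OF P W(2) h1(1) W(1)] W(4) a1 by simp
  have al: "a = Ar l W U c" using pt_comp[OF P W(3) h1(2) W(1)] W(5) a2 by simp
  have hk: "hom_site k W U" "hom_site l W U" using W(2,3) o unfolding hom_site_def by auto
  obtain W' c' j where j: "c' \<in> Ob W'" "hom_site j W' W" "k * j = l * j"
    using pt_eq[OF P hk W(1)] ak al by auto
  have "j \<ge> 1" using j(2) unfolding hom_site_def by auto
  then have kl: "k = l" using j(3) by simp
  have oi: "opn (V1 \<inter> V2)" using o opn_Int by blast
  have hI: "hom_site k W (V1 \<inter> V2)" using W(2,3) kl oi unfolding hom_site_def by auto
  have h1I: "hom_site 1 (V1 \<inter> V2) U" using hom1[OF oi o(3)] o(4) by auto
  have "Ar (1 * k) W U c = Ar 1 (V1 \<inter> V2) U (Ar k W (V1 \<inter> V2) c)" using pt_comp[OF P hI h1I W(1)] .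
  moreover have "Ar k W (V1 \<inter> V2) c \<in> Ob (V1 \<inter> V2)" using pt_map[OF P hI W(1)] .
  ultimately show ?thesis using ak by auto
qed

definition germpt where
  "germpt Ob Ar U a x \<longleftrightarrow> (\<forall>V. opn V \<and> x \<in> V \<and> V \<subseteq> U \<longrightarrow> a \<in> Ar 1 V U ` Ob V)"

lemma germ_exists:
  assumes P: "is_point Ob Ar" and U: "opn U" "a \<in> Ob U"
  shows "\<exists>x\<in>U. germpt Ob Ar U a x"
proof (rule ccontr)
  assume "\<not> ?thesis"
  then have "\<forall>x\<in>U. \<exists>V. opn V \<and> x \<in> V \<and> V \<subseteq> U \<and> a \<notin> Ar 1 V U ` Ob V"
    unfolding germpt_def by blast
  then obtain Vf where Vf: "\<And>x. x \<in> U \<Longrightarrow> opn (Vf x) \<and> x \<in> Vf x \<and> Vf x \<subseteq> U \<and> a \<notin> Ar 1 (Vf x) U ` Ob (Vf x)"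
    by metis
  have "\<Union>(Vf ` U) = U" using Vf by blast
  then have "Ob U = (\<Union>V\<in>Vf ` U. Ar 1 V U ` Ob V)"
    using pt_sheaf[OF P U(1), of "Vf ` U"] Vf by blast
  then show False using U(2) Vf by auto
qed

lemma germ_unique:
  assumes P: "is_point Ob Ar" and U: "opn U"
    and g: "x \<in> U" "germpt Ob Ar U a x" "y \<in> U" "germpt Ob Ar U a y"
  shows "x = y"
proof (rule ccontr)
  assume ne: "x \<noteq> y"
  define d where "d = dist x y / 2"
  have d: "d > 0" using ne by (simp add: d_def)
  have o: "opn (U \<inter> ball x d)" "opn (U \<inter> ball y d)" using U opn_Int_open by auto
  have "a \<in> Ar 1 (U \<inter> ball x d) U ` Ob (U \<inter> ball x d)" using g(1,2) o d unfolding germpt_def by auto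
  moreover have "a \<in> Ar 1 (U \<inter> ball y d) U ` Ob (U \<inter> ball y d)" using g(3,4) o d unfolding germpt_def by auto
  ultimately have "a \<in> Ar 1 ((U \<inter> ball x d) \<inter> (U \<inter> ball y d)) U ` Ob ((U \<inter> ball x d) \<inter> (U \<inter> ball y d))"
    using good_Int[OF P o U] by blast
  moreover have "(U \<inter> ball x d) \<inter> (U \<inter> ball y d) = {}"
  proof -
    have "z \<notin> ball x d \<inter> ball y d" for z
    proof
      assume "z \<in> ball x d \<inter> ball y d"
      then have "dist x z < d" "dist y z < d" by auto
      moreover have "dist x y \<le> dist x z + dist y z" by (rule dist_triangle2)
      ultimately show False unfolding d_def by linarith
    qed
    then have "ball x d \<inter> ball y d = {}" by blast
    then show ?thesis by auto
  qed
  ultimately show False using pt_empty[OF P] by auto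
qed

definition xpt where "xpt Ob Ar U a = (THE x. x \<in> U \<and> germpt Ob Ar U a x)"

lemma xpt:
  assumes P: "is_point Ob Ar" and U: "opn U" "a \<in> Ob U"
  shows "xpt Ob Ar U a \<in> U" "germpt Ob Ar U a (xpt Ob Ar U a)"
proof -
  obtain x where x: "x \<in> U" "germpt Ob Ar U a x" using germ_exists[OF assms] by blast
  have "xpt Ob Ar U a = x" unfolding xpt_def
    using germ_unique[OF P U(1)] x by blast
  then show "xpt Ob Ar U a \<in> U" "germpt Ob Ar U a (xpt Ob Ar U a)" using x by auto
qed

lemma xpt_eq:
  assumes P: "is_point Ob Ar" and U: "opn U" "a \<in> Ob U" and x: "x \<in> U" "germpt Ob Ar U a x"
  shows "xpt Ob Ar U a = x"
  using germ_unique[OF P U(1) xpt[OF assms(1-3)] x] .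

lemma xpt_compat:
  assumes P: "is_point Ob Ar" and h: "hom_site k W U" and c: "c \<in> Ob W"
  shows "xpt Ob Ar U (Ar k W U c) = real k * xpt Ob Ar W c"
proof -
  have oW: "opn W" and oU: "opn U" using h unfolding hom_site_def by auto
  define x where "x = xpt Ob Ar W c"
  have x: "x \<in> W" "germpt Ob Ar W c x" using xpt[OF P oW c] x_def by auto
  have kx: "real k * x \<in> U" using h x(1) unfolding hom_site_def by auto
  have "germpt Ob Ar U (Ar k W U c) (real k * x)"
    unfolding germpt_def
  proof (intro allI impI)
    fix V assume V: "opn V \<and> real k * x \<in> V \<and> V \<subseteq> U"
    obtain S where S: "open S" "V = {0..} \<inter> S" using V unfolding opn_def openin_open by blast
    define V' where "V' = W \<inter> {y. real k * y \<in> S}"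
    have oS: "open {y. real k * y \<in> S}"
    proof -
      have "open ((\<lambda>y::real. real k * y) -` S)"
        using S(1) by (rule continuous_open_vimage) (intro continuous_intros)
      then show ?thesis by (simp add: vimage_def)
    qed
    have oV': "opn V'" unfolding V'_def using opn_Int_open[OF oW oS] .
    have xV': "x \<in> V'" using x(1) V S unfolding V'_def by auto
    have V'W: "V' \<subseteq> W" unfolding V'_def by auto
    obtain d where d: "d \<in> Ob V'" "c = Ar 1 V' W d" using x(2) oV' xV' V'W unfolding germpt_def by blast
    have hV': "hom_site k V' V"
    proof -
      have "\<forall>y\<in>V'. real k * y \<in> V"
      proof
        fix y assume "y \<in> V'"
        then have "y \<in> W" "real k * y \<in> S" unfolding V'_def by auto
        moreover have "y \<ge> 0" using \<open>y \<in> W\<close> opn_sub[OF oW] by auto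
        ultimately show "real k * y \<in> V" using S by auto
      qed
      then show ?thesis using h oV' V unfolding hom_site_def by auto
    qed
    have h1: "hom_site 1 V' W" "hom_site 1 V U" using oV' oW V'W V oU hom1 by auto
    have "Ar (k * 1) V' U d = Ar k W U (Ar 1 V' W d)" using pt_comp[OF P h1(1) h d(1)] .
    moreover have "Ar (1 * k) V' U d = Ar 1 V U (Ar k V' V d)" using pt_comp[OF P hV' h1(2) d(1)] .
    moreover have "Ar k V' V d \<in> Ob V" using pt_map[OF P hV' d(1)] .
    ultimately show "Ar k W U c \<in> Ar 1 V U ` Ob V" using d by auto
  qed
  moreover have "Ar k W U c \<in> Ob U" using pt_map[OF P h c] .
  ultimately show ?thesis using xpt_eq[OF P oU _ kx] x_def by blast
qed



lemma piece:
  assumes c: "continuous_on V f" and x0: "x0 \<in> V" and L: "L \<subseteq> V" "x0 islimpt L"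
    and a: "affine_int_on L f"
  shows "(f x0 = -\<infinity> \<and> (\<forall>y\<in>L. f y = -\<infinity>)) \<or>
         (\<exists>(m::int) b. f x0 = ereal (of_int m * x0 + b) \<and> (\<forall>y\<in>L. f y = ereal (of_int m * y + b)))"
proof -
  have T: "(f \<longlongrightarrow> f x0) (at x0 within L)"
    using c x0 L(1) unfolding continuous_on_def by (meson tendsto_within_subset)
  have nb: "at x0 within L \<noteq> bot" using L(2) trivial_limit_within by blast
  show ?thesis
  proof (cases "\<forall>y\<in>L. f y = -\<infinity>")
    case True
    have ev: "\<forall>\<^sub>F y in at x0 within L. f y = -\<infinity>"
      unfolding eventually_at_filter by (rule always_eventually) (use True in auto)
    have "((\<lambda>y. -\<infinity>) \<longlongrightarrow> f x0) (at x0 within L)"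
      using tendsto_cong[OF ev] T by simp
    then have "f x0 = -\<infinity>" using tendsto_unique[OF nb _ tendsto_const] by metis
    then show ?thesis using True by blast
  next
    case False
    then obtain m :: int and b where mb: "\<forall>y\<in>L. f y = ereal (of_int m * y + b)"
      using a unfolding affine_int_on_def by blast
    have ev: "\<forall>\<^sub>F y in at x0 within L. f y = ereal (of_int m * y + b)"
      unfolding eventually_at_filter by (rule always_eventually) (use mb in auto)
    have T2: "((\<lambda>y. ereal (of_int m * y + b)) \<longlongrightarrow> f x0) (at x0 within L)"
      using tendsto_cong[OF ev] T by simp
    have T3: "((\<lambda>y. ereal (of_int m * y + b)) \<longlongrightarrow> ereal (of_int m * x0 + b)) (at x0 within L)"
      unfolding lim_ereal by (intro tendsto_intros)
    have "f x0 = ereal (of_int m * x0 + b)" using tendsto_unique[OF nb T2 T3] .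
    then show ?thesis using mb by blast
  qed
qed

lemma sh_cong: "stalk_hom Ob Ar \<psi> \<Longrightarrow> opn U \<Longrightarrow> a \<in> Ob U \<Longrightarrow> f \<in> O_sec U \<Longrightarrow> g \<in> O_sec U \<Longrightarrow>
    (\<forall>x\<in>U. f x = g x) \<Longrightarrow> \<psi> U a f = \<psi> U a g"
  apply (drule iffD1[OF stalk_hom_def, THEN conjunct1]) by blast
lemma sh_comp: "stalk_hom Ob Ar \<psi> \<Longrightarrow> hom_site k W U \<Longrightarrow> c \<in> Ob W \<Longrightarrow> f \<in> O_sec U \<Longrightarrow>
         \<psi> W c (\<lambda>x. f (real k * x)) = \<psi> U (Ar k W U c) f"
  apply (drule iffD1[OF stalk_hom_def, THEN conjunct2, THEN conjunct1]) by blast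
lemma sh_ops:
  assumes "stalk_hom Ob Ar \<psi>" "opn U" "a \<in> Ob U"
  shows "(\<forall>f\<in>O_sec U. \<psi> U a f \<noteq> \<infinity>)"
    "(\<forall>f\<in>O_sec U. \<forall>g\<in>O_sec U. \<psi> U a (\<lambda>x. max (f x) (g x)) = max (\<psi> U a f) (\<psi> U a g))"
    "(\<forall>f\<in>O_sec U. \<forall>g\<in>O_sec U. \<psi> U a (\<lambda>x. f x + g x) = \<psi> U a f + \<psi> U a g)"
    "\<psi> U a (\<lambda>x. -\<infinity>) = -\<infinity>"
    "\<psi> U a (\<lambda>x. 0) = 0"
    "(\<forall>f\<in>O_sec U. \<forall>c::real. \<psi> U a (\<lambda>x. ereal c + f x) = ereal c + \<psi> U a f)"
proof -
  have "\<forall>U a. opn U \<and> a \<in> Ob U \<longrightarrow>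
        (\<forall>f\<in>O_sec U. \<psi> U a f \<noteq> \<infinity>) \<and>
        (\<forall>f\<in>O_sec U. \<forall>g\<in>O_sec U. \<psi> U a (\<lambda>x. max (f x) (g x)) = max (\<psi> U a f) (\<psi> U a g)) \<and>
        (\<forall>f\<in>O_sec U. \<forall>g\<in>O_sec U. \<psi> U a (\<lambda>x. f x + g x) = \<psi> U a f + \<psi> U a g) \<and>
        \<psi> U a (\<lambda>x. -\<infinity>) = -\<infinity> \<and>
        \<psi> U a (\<lambda>x. 0) = 0 \<and>
        (\<forall>f\<in>O_sec U. \<forall>c::real. \<psi> U a (\<lambda>x. ereal c + f x) = ereal c + \<psi> U a f)"
    using assms(1) unfolding stalk_hom_def by (elim conjE)
  then have H: "(\<forall>f\<in>O_sec U. \<psi> U a f \<noteq> \<infinity>) \<and>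
        (\<forall>f\<in>O_sec U. \<forall>g\<in>O_sec U. \<psi> U a (\<lambda>x. max (f x) (g x)) = max (\<psi> U a f) (\<psi> U a g)) \<and>
        (\<forall>f\<in>O_sec U. \<forall>g\<in>O_sec U. \<psi> U a (\<lambda>x. f x + g x) = \<psi> U a f + \<psi> U a g) \<and>
        \<psi> U a (\<lambda>x. -\<infinity>) = -\<infinity> \<and>
        \<psi> U a (\<lambda>x. 0) = 0 \<and>
        (\<forall>f\<in>O_sec U. \<forall>c::real. \<psi> U a (\<lambda>x. ereal c + f x) = ereal c + \<psi> U a f)"
    using assms(2,3) by blast
  show "(\<forall>f\<in>O_sec U. \<psi> U a f \<noteq> \<infinity>)"
    "(\<forall>f\<in>O_sec U. \<forall>g\<in>O_sec U. \<psi> U a (\<lambda>x. max (f x) (g x)) = max (\<psi> U a f) (\<psi> U a g))"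
    "(\<forall>f\<in>O_sec U. \<forall>g\<in>O_sec U. \<psi> U a (\<lambda>x. f x + g x) = \<psi> U a f + \<psi> U a g)"
    "\<psi> U a (\<lambda>x. -\<infinity>) = -\<infinity>"
    "\<psi> U a (\<lambda>x. 0) = 0"
    "(\<forall>f\<in>O_sec U. \<forall>c::real. \<psi> U a (\<lambda>x. ereal c + f x) = ereal c + \<psi> U a f)"
    using H by blast+
qed

lemma aff_nat: "opn U \<Longrightarrow> (\<lambda>y. ereal (real n * y)) \<in> O_sec U"
  using aff_O_sec[of U "int n" 0] by simp
lemma aff_neg_nat: "opn U \<Longrightarrow> (\<lambda>y. ereal (- (real n * y))) \<in> O_sec U"
  using aff_O_sec[of U "- int n" 0] by simp
lemma aff_id: "opn U \<Longrightarrow> (\<lambda>y. ereal y) \<in> O_sec U"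
  using aff_nat[of U 1] by simp

lemma psi_aff:
  assumes S: "stalk_hom Ob Ar \<psi>" and U: "opn U" "a \<in> Ob U"
  shows "\<exists>t. \<forall>(m::int) b. \<psi> U a (\<lambda>y. ereal (of_int m * y + b)) = ereal (of_int m * t + b)"
proof -
  note ops = sh_ops[OF S U]
  have z: "(\<lambda>y. ereal (real 0 * y)) = (\<lambda>x. 0)" by (simp add: zero_ereal_def)
  have negsum: "\<psi> U a (\<lambda>y. ereal (real n * y)) + \<psi> U a (\<lambda>y. ereal (- (real n * y))) = 0" for n
  proof -
    have "(\<lambda>y. ereal (real n * y) + ereal (- (real n * y))) = (\<lambda>x. 0)" by (simp add: zero_ereal_def)
    then show ?thesis using ops(3,5) aff_nat[OF U(1), of n] aff_neg_nat[OF U(1), of n] by metis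
  qed
  obtain t where t: "\<psi> U a (\<lambda>y. ereal y) = ereal t"
  proof -
    have s: "\<psi> U a (\<lambda>y. ereal (real 1 * y)) + \<psi> U a (\<lambda>y. ereal (- (real 1 * y))) = 0" using negsum .
    have "\<psi> U a (\<lambda>y. ereal y) \<noteq> \<infinity>" "\<psi> U a (\<lambda>y. ereal (- y)) \<noteq> \<infinity>"
      using ops(1) aff_id[OF U(1)] aff_neg_nat[OF U(1), of 1] by auto
    moreover have "\<psi> U a (\<lambda>y. ereal y) + \<psi> U a (\<lambda>y. ereal (- y)) = 0" using s by simp
    ultimately have "\<psi> U a (\<lambda>y. ereal y) \<noteq> -\<infinity>"
      by (cases "\<psi> U a (\<lambda>y. ereal (- y))") auto
    then show ?thesis using that \<open>\<psi> U a (\<lambda>y. ereal y) \<noteq> \<infinity>\<close> by (cases "\<psi> U a (\<lambda>y. ereal y)") auto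
  qed
  have natt: "\<psi> U a (\<lambda>y. ereal (real n * y)) = ereal (real n * t)" for n
  proof (induction n)
    case 0 show ?case using ops(5) z by (simp add: zero_ereal_def)
  next
    case (Suc n)
    have feq: "(\<lambda>y. ereal (real (Suc n) * y)) = (\<lambda>y. ereal (real n * y) + ereal y)"
      by (auto simp: algebra_simps)
    have e1: "\<psi> U a (\<lambda>y. ereal (real n * y) + ereal y) = \<psi> U a (\<lambda>y. ereal (real n * y)) + \<psi> U a (\<lambda>y. ereal y)"
      using ops(3)[rule_format, OF aff_nat[OF U(1), of n] aff_id[OF U(1)]] .
    have "\<psi> U a (\<lambda>y. ereal (real (Suc n) * y)) = \<psi> U a (\<lambda>y. ereal (real n * y)) + \<psi> U a (\<lambda>y. ereal y)"
      unfolding feq by (rule e1)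
    also have "\<dots> = ereal (real (Suc n) * t)"
      using Suc t by (simp add: algebra_simps)
    finally show ?case .
  qed
  have negt: "\<psi> U a (\<lambda>y. ereal (- (real n * y))) = ereal (- (real n * t))" for n
  proof -
    have "ereal (real n * t) + \<psi> U a (\<lambda>y. ereal (- (real n * y))) = 0" using negsum[of n] natt[of n] by simp
    then show ?thesis
      by (cases "\<psi> U a (\<lambda>y. ereal (- (real n * y)))") (auto simp: zero_ereal_def)
  qed
  have intt: "\<psi> U a (\<lambda>y. ereal (of_int m * y)) = ereal (of_int m * t)" for m :: int
  proof (cases "m \<ge> 0")
    case True
    then obtain n where "m = int n" by (metis nonneg_eq_int)
    then show ?thesis using natt[of n] by simp
  next
    case False
    then obtain n where "m = - int n" proof -
      have "- m \<ge> 0" using False by simp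
      then obtain n where "- m = int n" by (metis nonneg_eq_int)
      then show ?thesis using that by (metis minus_minus)
    qed
    then show ?thesis using negt[of n] by simp
  qed
  have "\<psi> U a (\<lambda>y. ereal (of_int m * y + b)) = ereal (of_int m * t + b)" for m :: int and b
  proof -
    have "(\<lambda>y. ereal (of_int m * y + b)) = (\<lambda>y. ereal b + ereal (of_int m * y))" by (auto simp: add.commute)
    moreover have "(\<lambda>y. ereal (of_int m * y)) \<in> O_sec U" using aff_O_sec[OF U(1), of m 0] by simp
    moreover have "\<psi> U a (\<lambda>y. ereal b + ereal (of_int m * y)) = ereal b + \<psi> U a (\<lambda>y. ereal (of_int m * y))"
      using ops(6)[rule_format, OF \<open>(\<lambda>y. ereal (of_int m * y)) \<in> O_sec U\<close>, of b] .
    ultimately show ?thesis using intt[of m] by (simp add: add.commute)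
  qed
  then show ?thesis by blast
qed



lemma sh_res:
  assumes S: "stalk_hom Ob Ar \<psi>" and "opn V" "opn U" "V \<subseteq> U" "bb \<in> Ob V" "f \<in> O_sec U"
  shows "\<psi> V bb f = \<psi> U (Ar 1 V U bb) f"
  using sh_comp[OF S hom1[OF assms(2-4)] assms(5,6)] by simp

lemma sep:
  assumes S: "stalk_hom Ob Ar \<psi>" and V: "opn V" "bb \<in> Ob V"
    and t: "\<forall>(m::int) b. \<psi> V bb (\<lambda>y. ereal (of_int m * y + b)) = ereal (of_int m * t + b)"
    and neg: "\<forall>y\<in>V. of_int m * y + c \<le> 0"
  shows "of_int m * t + c \<le> (0::real)"
proof -
  note ops = sh_ops[OF S V]
  define h where "h = (\<lambda>x. max (ereal (of_int 0 * x + 0)) (ereal (of_int m * x + c)))"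
  have a0: "(\<lambda>y. ereal (of_int 0 * y + 0)) \<in> O_sec V" and am: "(\<lambda>y. ereal (of_int m * y + c)) \<in> O_sec V"
    using aff_O_sec[OF V(1)] by blast+
  have M: "\<psi> V bb h = max (\<psi> V bb (\<lambda>y. ereal (of_int 0 * y + 0))) (\<psi> V bb (\<lambda>y. ereal (of_int m * y + c)))"
    unfolding h_def using ops(2)[rule_format, OF a0 am] .
  have eq: "\<forall>y\<in>V. ereal (of_int 0 * y + 0) = h y" unfolding h_def using neg by auto
  have hO: "h \<in> O_sec V" using O_sec_cong[OF a0 eq] .
  have "\<psi> V bb (\<lambda>y. ereal (of_int 0 * y + 0)) = \<psi> V bb h" using sh_cong[OF S V a0 hO eq] .
  then have "max (ereal (of_int 0 * t + 0)) (ereal (of_int m * t + c)) = ereal (of_int 0 * t + 0)"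
    using M t by metis
  then show ?thesis by (simp add: max_def split: if_splits)
qed

lemma psi_t:
  assumes P: "is_point Ob Ar" and S: "stalk_hom Ob Ar \<psi>" and U: "opn U" "a \<in> Ob U"
  shows "\<psi> U a (\<lambda>y. ereal (of_int m * y + b)) = ereal (of_int m * xpt Ob Ar U a + b)"
proof -
  obtain t where t: "\<forall>(m::int) b. \<psi> U a (\<lambda>y. ereal (of_int m * y + b)) = ereal (of_int m * t + b)"
    using psi_aff[OF S U] by blast
  define x0 where "x0 = xpt Ob Ar U a"
  have x0: "x0 \<in> U" "germpt Ob Ar U a x0" using xpt[OF P U] x0_def by auto
  have tV: "\<forall>(m::int) b. \<psi> V bb (\<lambda>y. ereal (of_int m * y + b)) = ereal (of_int m * t + b)"
    if V: "opn V" "x0 \<in> V" "V \<subseteq> U" "bb \<in> Ob V" "a = Ar 1 V U bb" for V bb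
  proof (intro allI)
    fix m :: int and b
    show "\<psi> V bb (\<lambda>y. ereal (of_int m * y + b)) = ereal (of_int m * t + b)"
      using sh_res[OF S V(1) U(1) V(3) V(4) aff_O_sec[OF U(1)]] V(5) t by simp
  qed
  have "t = x0"
  proof (rule ccontr)
    assume "t \<noteq> x0"
    then consider "t > x0" | "t < x0" by linarith
    then show False
    proof cases
      case 1
      define s where "s = (x0 + t) / 2"
      define V where "V = U \<inter> {..<s}"
      have oV: "opn V" unfolding V_def using opn_Int_open[OF U(1)] by simp
      have xV: "x0 \<in> V" "V \<subseteq> U" unfolding V_def s_def using 1 x0 by auto
      obtain bb where bb: "bb \<in> Ob V" "a = Ar 1 V U bb" using x0(2) oV xV unfolding germpt_def by blast
      have "of_int 1 * t + (- s) \<le> 0"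
        using sep[OF S oV bb(1) tV[OF oV xV bb], of 1 "-s"] unfolding V_def by auto
      then show False unfolding s_def using 1 by simp
    next
      case 2
      define s where "s = (x0 + t) / 2"
      define V where "V = U \<inter> {s<..}"
      have oV: "opn V" unfolding V_def using opn_Int_open[OF U(1)] by simp
      have xV: "x0 \<in> V" "V \<subseteq> U" unfolding V_def s_def using 2 x0 by auto
      obtain bb where bb: "bb \<in> Ob V" "a = Ar 1 V U bb" using x0(2) oV xV unfolding germpt_def by blast
      have "of_int (-1) * t + s \<le> 0"
        using sep[OF S oV bb(1) tV[OF oV xV bb], of "-1" s] unfolding V_def by auto
      then show False unfolding s_def using 2 by simp
    qed
  qed
  then show ?thesis using t x0_def by simp
qed



lemma psi_eval:
  assumes P: "is_point Ob Ar" and S: "stalk_hom Ob Ar \<psi>" and U: "opn U" "a \<in> Ob U" and f: "f \<in> O_sec U"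
  shows "\<psi> U a f = f (xpt Ob Ar U a)"
proof -
  define x0 where "x0 = xpt Ob Ar U a"
  have x0: "x0 \<in> U" "germpt Ob Ar U a x0" using xpt[OF P U] x0_def by auto
  have x0pos: "x0 \<ge> 0" using x0(1) opn_sub[OF U(1)] by auto
  obtain e where e: "e > 0" "{x0-e<..<x0+e} \<inter> {0..} \<subseteq> U"
      "affine_int_on ({x0-e<..<x0} \<inter> {0..}) f" "affine_int_on ({x0<..<x0+e} \<inter> {0..}) f"
    using f x0(1) unfolding O_sec_def by blast
  define e1 where "e1 = (if x0 = 0 then e else min e x0)"
  have e1: "e1 > 0" "e1 \<le> e" "x0 > 0 \<Longrightarrow> e1 \<le> x0" unfolding e1_def using e(1) x0pos by auto
  define V where "V = {x0-e1<..<x0+e1} \<inter> {0..}"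
  have oV: "opn V" unfolding opn_def V_def
    by (subst Int_commute) (rule openin_open_Int[OF open_greaterThanLessThan])
  have xV: "x0 \<in> V" unfolding V_def using e1 x0pos by auto
  have VU: "V \<subseteq> U" using e(2) e1(2) unfolding V_def by auto
  obtain bb where bb: "bb \<in> Ob V" "a = Ar 1 V U bb" using x0(2) oV xV VU unfolding germpt_def by blast
  have fV: "f \<in> O_sec V" using O_sec_restrict[OF f oV VU] .
  have psiV: "\<psi> U a f = \<psi> V bb f" using sh_res[OF S oV U(1) VU bb(1) f] bb(2) by simp
  have xptV: "xpt Ob Ar V bb = x0"
    using xpt_compat[OF P hom1[OF oV U(1) VU] bb(1)] bb(2) x0_def by simp
  have affV: "\<psi> V bb (\<lambda>y. ereal (of_int m * y + b)) = ereal (of_int m * x0 + b)" for m b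
    using psi_t[OF P S oV bb(1)] xptV by simp
  note ops = sh_ops[OF S oV bb(1)]
  have cV: "continuous_on V f" and fin: "\<forall>y\<in>V. f y \<noteq> \<infinity>" using fV unfolding O_sec_def by auto
  define R where "R = {x0<..<x0+e1}"
  have RV: "R \<subseteq> V" unfolding R_def V_def using x0pos by auto
  have Rl: "x0 islimpt R" unfolding R_def using e1(1) by (intro islimpt_greaterThanLessThan1) simp
  have Ra: "affine_int_on R f"
    by (rule affine_int_on_mono[OF e(4)]) (use e1(2) x0pos in \<open>auto simp: R_def\<close>)
  have pR: "(f x0 = -\<infinity> \<and> (\<forall>y\<in>R. f y = -\<infinity>)) \<or>
         (\<exists>(m::int) b. f x0 = ereal (of_int m * x0 + b) \<and> (\<forall>y\<in>R. f y = ereal (of_int m * y + b)))"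
    using piece[OF cV xV RV Rl Ra] .
  define Lf where "Lf = {x0-e1<..<x0}"
  have pL: "(f x0 = -\<infinity> \<and> (\<forall>y\<in>Lf. f y = -\<infinity>)) \<or>
         (\<exists>(m::int) b. f x0 = ereal (of_int m * x0 + b) \<and> (\<forall>y\<in>Lf. f y = ereal (of_int m * y + b)))"
    if pos: "x0 > 0"
  proof -
    have LV: "Lf \<subseteq> V" unfolding Lf_def V_def using e1(3)[OF pos] by auto
    have Ll: "x0 islimpt Lf" unfolding Lf_def using e1(1) by (intro islimpt_greaterThanLessThan2) simp
    have La: "affine_int_on Lf f"
      by (rule affine_int_on_mono[OF e(3)]) (use e1(2,3) pos in \<open>auto simp: Lf_def\<close>)
    show ?thesis using piece[OF cV xV LV Ll La] .
  qed
  have yV: "y \<in> R" if "y \<in> V" "y > x0" for y using that unfolding R_def V_def by auto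
  have yL: "x0 > 0 \<and> y \<in> Lf" if "y \<in> V" "y < x0" for y using that unfolding Lf_def V_def by auto
  show ?thesis
  proof (cases "f x0 = -\<infinity>")
    case True
    have allm: "\<forall>y\<in>V. f y = -\<infinity>"
    proof
      fix y assume y: "y \<in> V"
      consider "y = x0" | "y > x0" | "y < x0" by linarith
      then show "f y = -\<infinity>"
      proof cases
        case 1 then show ?thesis using True by simp
      next
        case 2 then show ?thesis using pR yV[OF y] True by auto
      next
        case 3 then show ?thesis using pL yL[OF y] True by auto
      qed
    qed
    have mO: "(\<lambda>y. -\<infinity>) \<in> O_sec V" using O_sec_cong[OF fV] allm by simp
    have "\<psi> V bb f = \<psi> V bb (\<lambda>y. -\<infinity>)" using sh_cong[OF S oV bb(1) fV mO] allm by simp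
    then show ?thesis using psiV ops(4) True x0_def by simp
  next
    case False
    obtain m2 :: int and b2 where R2: "f x0 = ereal (of_int m2 * x0 + b2)" "\<forall>y\<in>R. f y = ereal (of_int m2 * y + b2)"
      using pR False by blast
    obtain m1 :: int and b1 where L1: "of_int m1 * x0 + b1 = of_int m2 * x0 + b2" "of_int m1 \<le> (of_int m2 :: real)"
      "\<forall>y\<in>V. y < x0 \<longrightarrow> f y = ereal (of_int m1 * y + b1)"
    proof (cases "x0 = 0")
      case True
      then show ?thesis using that[of m2 b2] unfolding V_def by auto
    next
      case nz: False
      then have pos: "x0 > 0" using x0pos by simp
      obtain m1 :: int and b1 where L: "f x0 = ereal (of_int m1 * x0 + b1)" "\<forall>y\<in>Lf. f y = ereal (of_int m1 * y + b1)"
        using pL[OF pos] False by blast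
      have b1eq: "of_int m1 * x0 + b1 = of_int m2 * x0 + b2" using L(1) R2(1) by simp
      define d where "d = e1 / 2"
      have d: "d > 0" "d < e1" unfolding d_def using e1 by auto
      define y1 where "y1 = x0 - d"
      define z where "z = x0 + d"
      have y1L: "y1 \<in> Lf" unfolding y1_def Lf_def using d by auto
      have zR: "z \<in> R" unfolding z_def R_def using d by auto
      have y1pos: "y1 \<ge> 0" unfolding y1_def using d e1(3)[OF pos] by auto
      have sub: "{y1..z} \<subseteq> U" using VU d y1pos unfolding V_def y1_def z_def by auto
      have y1U: "y1 \<in> U" "z \<in> U" using sub unfolding y1_def z_def using d by auto
      have conv: "\<forall>x\<in>U. \<forall>y\<in>U. \<forall>t::real. x \<le> y \<and> {x..y} \<subseteq> U \<and> 0 \<le> t \<and> t \<le> 1 \<longrightarrow>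
          f ((1 - t) * x + t * y) \<le> ereal (1 - t) * f x + ereal t * f y"
        using f unfolding O_sec_def by blast
      have "f ((1 - 1/2) * y1 + 1/2 * z) \<le> ereal (1 - 1/2) * f y1 + ereal (1/2) * f z"
        by (rule conv[rule_format, OF y1U(1) y1U(2)]) (use sub d in \<open>auto simp: y1_def z_def\<close>)
      moreover have "(1 - 1/2) * y1 + 1/2 * z = x0" unfolding y1_def z_def by (simp add: field_simps)
      ultimately have "f x0 \<le> ereal (1/2) * f y1 + ereal (1/2) * f z" by simp
      then have ineq: "of_int m2 * x0 + b2 \<le> 1/2 * (of_int m1 * y1 + b1) + 1/2 * (of_int m2 * z + b2)"
        using R2 L(2) y1L zR by simp
      have e2: "1/2 * (of_int m1 * y1 + b1) + 1/2 * (of_int m2 * z + b2) =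
          1/2 * (of_int m1 * x0 + b1) + 1/2 * (of_int m2 * x0 + b2) + d/2 * (of_int m2 - of_int m1)"
        unfolding y1_def z_def by (simp add: field_simps)
      define K where "K = d/2 * (of_int m2 - of_int m1 :: real)"
      define Q where "Q = of_int m2 * x0 + b2"
      have "Q \<le> 1/2 * Q + 1/2 * Q + K"
        using ineq unfolding e2 b1eq K_def[symmetric] Q_def[symmetric] .
      then have "0 \<le> K" by linarith
      then have "0 \<le> d/2 * (of_int m2 - of_int m1)" unfolding K_def .
      then have "of_int m1 \<le> (of_int m2 :: real)" using d(1) by (simp add: zero_le_mult_iff)
      moreover have "\<forall>y\<in>V. y < x0 \<longrightarrow> f y = ereal (of_int m1 * y + b1)" using L(2) yL by blast
      ultimately show ?thesis using that b1eq by blast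
    qed
    define F where "F = (\<lambda>y. max (ereal (of_int m1 * y + b1)) (ereal (of_int m2 * y + b2)))"
    have diff: "of_int m2 * y + b2 - (of_int m1 * y + b1) = (of_int m2 - of_int m1) * (y - x0)" for y
    proof -
      have "(of_int m2 - of_int m1) * (y - x0) = of_int m2 * y - of_int m2 * x0 - of_int m1 * y + of_int m1 * x0"
        by (simp add: algebra_simps)
      then show ?thesis using L1(1) by linarith
    qed
    have fF: "\<forall>y\<in>V. f y = F y"
    proof
      fix y assume y: "y \<in> V"
      consider "y = x0" | "y > x0" | "y < x0" by linarith
      then show "f y = F y"
      proof cases
        case 1 then show ?thesis using R2(1) L1(1) unfolding F_def by simp
      next
        case 2
        have "0 \<le> (of_int m2 - of_int m1) * (y - x0)" using 2 L1(2) by simp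
        then show ?thesis using R2(2) yV[OF y 2] diff[of y] unfolding F_def by simp
      next
        case 3
        have "(of_int m2 - of_int m1) * (y - x0) \<le> 0" using 3 L1(2) by (simp add: mult_nonneg_nonpos)
        then show ?thesis using L1(3) y 3 diff[of y] unfolding F_def by simp
      qed
    qed
    have FO: "F \<in> O_sec V" using O_sec_cong[OF fV fF] .
    have "\<psi> V bb F = max (\<psi> V bb (\<lambda>y. ereal (of_int m1 * y + b1))) (\<psi> V bb (\<lambda>y. ereal (of_int m2 * y + b2)))"
      unfolding F_def using ops(2)[rule_format, OF aff_O_sec[OF oV] aff_O_sec[OF oV]] .
    then have "\<psi> V bb F = f x0" using affV R2(1) L1(1) by simp
    moreover have "\<psi> V bb f = \<psi> V bb F" using sh_cong[OF S oV bb(1) fV FO fF] .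
    ultimately show ?thesis using psiV x0_def by simp
  qed
qed

lemma exists_sh:
  assumes P: "is_point Ob Ar"
  shows "stalk_hom Ob Ar (\<lambda>U a f. f (xpt Ob Ar U a))"
proof -
  have h1: "\<forall>U a f g. opn U \<and> a \<in> Ob U \<and> f \<in> O_sec U \<and> g \<in> O_sec U \<and> (\<forall>x\<in>U. f x = g x)
         \<longrightarrow> f (xpt Ob Ar U a) = g (xpt Ob Ar U a)"
    using xpt(1)[OF P] by blast
  have h2: "\<forall>k W U c f. hom_site k W U \<and> c \<in> Ob W \<and> f \<in> O_sec U \<longrightarrow>
         f (real k * xpt Ob Ar W c) = f (xpt Ob Ar U (Ar k W U c))"
    using xpt_compat[OF P] by simp
  have h3: "\<forall>U a. opn U \<and> a \<in> Ob U \<longrightarrow>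
        (\<forall>f\<in>O_sec U. f (xpt Ob Ar U a) \<noteq> \<infinity>)"
    using xpt(1)[OF P] unfolding O_sec_def by blast
  show ?thesis unfolding stalk_hom_def using h1 h2 h3 by simp
qed

theorem theorem4p3:
  fixes Ob :: "real set \<Rightarrow> 'p set"
    and Ar :: "nat \<Rightarrow> real set \<Rightarrow> real set \<Rightarrow> 'p \<Rightarrow> 'p"
  assumes "is_point Ob Ar"
  shows "(\<exists>\<phi>. stalk_hom Ob Ar \<phi>) \<and>
    (\<forall>\<phi> \<psi>. stalk_hom Ob Ar \<phi> \<and> stalk_hom Ob Ar \<psi> \<longrightarrow>
       (\<exists>\<sigma>. point_aut Ob Ar \<sigma> \<and>
          (\<forall>U a f. opn U \<and> a \<in> Ob U \<and> f \<in> O_sec U \<longrightarrow> \<psi> U (\<sigma> U a) f = \<phi> U a f)))"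
proof (intro conjI allI impI)
  show "\<exists>\<phi>. stalk_hom Ob Ar \<phi>" using exists_sh[OF assms] by blast
next
  fix \<phi> \<psi> assume h: "stalk_hom Ob Ar \<phi> \<and> stalk_hom Ob Ar \<psi>"
  have pa: "point_aut Ob Ar (\<lambda>U a. a)" unfolding point_aut_def by (simp add: bij_betw_def)
  have "\<forall>U a f. opn U \<and> a \<in> Ob U \<and> f \<in> O_sec U \<longrightarrow> \<psi> U a f = \<phi> U a f"
    using psi_eval[OF assms] h by metis
  then show "\<exists>\<sigma>. point_aut Ob Ar \<sigma> \<and>
          (\<forall>U a f. opn U \<and> a \<in> Ob U \<and> f \<in> O_sec U \<longrightarrow> \<psi> U (\<sigma> U a) f = \<phi> U a f)"
    using pa by blast
qed

end
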